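(* Under the Standing Setup and Assumption (G) described in the context, suppose there exists exactly one $a\in V_k$ such that $\mathcal{E}(f\oplus\varphi_a)\neq0$. Then $$\mathcal{E}(PC_{f,\mathcal{T}})=\big[\mathcal{E}(f\oplus\varphi_a)\big]^{2^s}.$$ In particular, if $f$ is $(k-1)$-resilient, then $\mathcal{E}(PC_{f,\mathcal{T}})=\big[\mathcal{E}(f\oplus\varphi_{1_k})\big]^{2^s}$, where $1_k\in\mathbf{F}_2^n$ has its first $k$ coordinates equal to $1$ and the others equal to $0$.
   Context: Standing Setup. $f:\mathbf{F}_2^n\to\mathbf{F}_2$ is a Boolean function. $\mathbf{x}_1,\ldots,\mathbf{x}_n$ are binary sequences, $\mathbf{x}_j=(x_j(t))_{t\ge0}$, with $\mathbf{x}_j$ periodic of period $T_j$, i.e. $x_j(t)=x_j(t \bmod T_j)$. Let $s\ge1$ and integers $0=\ell_1<\ell_2<\cdots<\ell_{s+1}=k\le n$; variable $j$ belongs to block $i$ if $\ell_i<j\le\ell_{i+1}$. For $1\le i\le s$, $M_i=q_i\,\mathrm{lcm}(T_{\ell_i+1},\ldots,T_{\ell_{i+1}})$ with $q_i$ a positive integer. For $c=\sum_{i=1}^s c_i2^{i-1}\in\{0,\ldots,2^s-1\}$ with $c_i\in\{0,1\}$, put $\tau_c=\sum_{i=1}^s c_iM_i$, and $\mathcal{T}=\{\tau_c\}$. The parity-check sequence is $PC_{f,\mathcal{T}}(t)=\bigoplus_{c=0}^{2^s-1} f\big(x_1(t+\tau_c),\ldots,x_n(t+\tau_c)\big)$.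 The bias of a Boolean function $h$ of $m$ variables is $\mathcal{E}(h)=2^{-m}\sum_{x\in\mathbf{F}_2^m}(-1)^{h(x)}$. The bias $\mathcal{E}(PC_{f,\mathcal{T}})$ is the bias of $PC_{f,\mathcal{T}}(t)$ (for a fixed $t\ge0$) viewed as a Boolean function of the $T_1+\cdots+T_n$ bits $x_j(0),\ldots,x_j(T_j-1)$, $1\le j\le n$; equivalently $\mathbb{E}[(-1)^{PC_{f,\mathcal{T}}(t)}]$ when these bits are independent and uniform. Assumption (G): (i) for every $j$ with $k<j\le n$, the $2^s$ integers $\tau_c$ are pairwise incongruent modulo $T_j$; (ii) for every $i\in\{1,\ldots,s\}$ and every $j$ in block $i$, the $2^{s-1}$ integers $\sum_{l\ne i}c_lM_l$ ($c_l\in\{0,1\}$) are pairwise incongruent modulo $T_j$. $V_k\subseteq\mathbf{F}_2^n$ is the subspace spanned by the first $k$ standard basis vectors. For $\beta\in\mathbf{F}_2^n$, $\varphi_\beta$ is the linear function $x\mapsto\beta\cdot x$. A Boolean function $f$ of $n$ variables is $t$-resilient if $\mathcal{E}(f\oplus\varphi_\beta)=0$ for every $\beta\in\mathbf{F}_2^n$ of Hamming weight at most $t$ (equivalently, $f$ is balanced and its output distribution is unchanged when any $t$ inputs are fixed). *)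

theory Defs
  imports Complex_Main
begin

text \<open>Binary vectors indexed by a set I: functions that are False outside I.
  F_2^n is bvecs {1..n} (coordinates numbered 1..n, as in the paper).\<close>
definition bvecs :: "'a set \<Rightarrow> ('a \<Rightarrow> bool) set" where
  "bvecs I = {x. \<forall>i. x i \<longrightarrow> i \<in> I}"

definition bias_on :: "'a set \<Rightarrow> (('a \<Rightarrow> bool) \<Rightarrow> bool) \<Rightarrow> real" where
  "bias_on I h = (\<Sum>x\<in>bvecs I. (if h x then -1 else 1)) / 2 ^ card I"

definition lin :: "nat \<Rightarrow> (nat \<Rightarrow> bool) \<Rightarrow> (nat \<Rightarrow> bool) \<Rightarrow> bool" where
  "lin n \<beta> x = odd (card {j\<in>{1..n}. \<beta> j \<and> x j})"

definition bias_lin :: "nat \<Rightarrow> ((nat \<Rightarrow> bool) \<Rightarrow> bool) \<Rightarrow> (nat \<Rightarrow> bool) \<Rightarrow> real" where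
  "bias_lin n f \<beta> = bias_on {1..n} (\<lambda>x. f x \<noteq> lin n \<beta> x)"

definition hweight :: "nat \<Rightarrow> (nat \<Rightarrow> bool) \<Rightarrow> nat" where
  "hweight n \<beta> = card {j\<in>{1..n}. \<beta> j}"

definition resilient :: "nat \<Rightarrow> nat \<Rightarrow> ((nat \<Rightarrow> bool) \<Rightarrow> bool) \<Rightarrow> bool" where
  "resilient n t f \<longleftrightarrow> (\<forall>\<beta>\<in>bvecs {1..n}. hweight n \<beta> \<le> t \<longrightarrow> bias_lin n f \<beta> = 0)"

text \<open>tau_c = sum_{i=1}^s c_i M_i where c_i is bit (i-1) of c.\<close>
definition tau :: "nat \<Rightarrow> (nat \<Rightarrow> nat) \<Rightarrow> nat \<Rightarrow> nat" where
  "tau s M c = (\<Sum>i\<in>{1..s}. if odd (c div 2 ^ (i - 1)) then M i else 0)"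

definition tau_excl :: "nat \<Rightarrow> (nat \<Rightarrow> nat) \<Rightarrow> nat \<Rightarrow> nat \<Rightarrow> nat" where
  "tau_excl s M i c = (\<Sum>l\<in>{1..s} - {i}. if odd (c div 2 ^ (l - 1)) then M l else 0)"

text \<open>The bits x_j(0..T_j-1) of the n periodic sequences, indexed by pairs (j,u).\<close>
definition seq_vars :: "nat \<Rightarrow> (nat \<Rightarrow> nat) \<Rightarrow> (nat \<times> nat) set" where
  "seq_vars n T = {(j, u). j \<in> {1..n} \<and> u < T j}"

definition seqv :: "(nat \<times> nat \<Rightarrow> bool) \<Rightarrow> (nat \<Rightarrow> nat) \<Rightarrow> nat \<Rightarrow> nat \<Rightarrow> bool" where
  "seqv X T j t = X (j, t mod T j)"

text \<open>Parity-check sequence PC(t) = XOR_{c<2^s} f(x_1(t+tau_c),...,x_n(t+tau_c)),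
  as a Boolean function of the sequence bits X.\<close>
definition PC :: "nat \<Rightarrow> nat \<Rightarrow> (nat \<Rightarrow> nat) \<Rightarrow> (nat \<Rightarrow> nat) \<Rightarrow> ((nat \<Rightarrow> bool) \<Rightarrow> bool)
    \<Rightarrow> nat \<Rightarrow> (nat \<times> nat \<Rightarrow> bool) \<Rightarrow> bool" where
  "PC n s M T f t X =
     odd (card {c\<in>{..<2 ^ s}.
        f (\<lambda>j. if j \<in> {1..n} then seqv X T j (t + tau s M c) else False)})"

definition bias_PC :: "nat \<Rightarrow> nat \<Rightarrow> (nat \<Rightarrow> nat) \<Rightarrow> (nat \<Rightarrow> nat) \<Rightarrow> ((nat \<Rightarrow> bool) \<Rightarrow> bool)
    \<Rightarrow> nat \<Rightarrow> real" where
  "bias_PC n s M T f t = bias_on (seq_vars n T) (PC n s M T f t)"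

end

theory Submission
  imports Defs
begin



lemma bitA: fixes c m s :: nat assumes "c < 2^s" "m < s" "\<not> bit c m"
  shows "c + 2^m < 2^s" and "\<And>l. bit (c + 2^m) l \<longleftrightarrow> l = m \<or> bit c l"
proof -
  have e: "c + 2^m = set_bit m c" using assms(3) by (simp add: set_bit_eq)
  have "take_bit s c = c" using assms(1) take_bit_nat_eq_self_iff by blast
  then have "take_bit s (set_bit m c) = set_bit m c"
    using assms by (simp add: take_bit_set_bit_eq)
  then show "c + 2^m < 2^s" using e take_bit_nat_eq_self_iff by metis
  show "\<And>l. bit (c + 2^m) l \<longleftrightarrow> l = m \<or> bit c l" using e by (auto simp: bit_set_bit_iff)
qed

lemma bitB: fixes c m :: nat assumes "bit c m"
  shows "c = unset_bit m c + 2^m" "\<not> bit (unset_bit m c) m" "unset_bit m c \<le> c"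
proof -
  show nb: "\<not> bit (unset_bit m c) m" by (simp add: bit_unset_bit_iff)
  have "set_bit m (unset_bit m c) = c"
    by (rule bit_eqI) (use assms in \<open>auto simp: bit_simps\<close>)
  then show e: "c = unset_bit m c + 2^m" using nb by (simp add: set_bit_eq)
  then show "unset_bit m c \<le> c" by linarith
qed
lemma pair_prod: fixes phi :: "nat \<Rightarrow> real"
  assumes "m < s" "\<forall>c<2^s. \<not> bit c m \<longrightarrow> phi (c + 2^m) = phi c" "\<forall>c. phi c * phi c = 1"
  shows "(\<Prod>c<2^s. phi c) = 1"
proof -
  define A where "A = {c. c < (2::nat)^s \<and> \<not> bit c m}"
  have fA: "finite A" unfolding A_def by auto
  have U: "{..<2^s} = A \<union> (\<lambda>c. c + 2^m) ` A"
  proof (rule set_eqI, rule iffI)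
    fix c assume c: "c \<in> {..<(2::nat)^s}"
    show "c \<in> A \<union> (\<lambda>c. c + 2^m) ` A"
    proof (cases "bit c m")
      case True
      then have "c = unset_bit m c + 2^m" "\<not> bit (unset_bit m c) m" "unset_bit m c \<le> c" using bitB by auto
      moreover have "unset_bit m c < 2^s" using c \<open>unset_bit m c \<le> c\<close> by auto
      ultimately show ?thesis unfolding A_def by blast
    next
      case False then show ?thesis using c unfolding A_def by auto
    qed
  next
    fix c assume "c \<in> A \<union> (\<lambda>c. c + 2^m) ` A"
    then show "c \<in> {..<2^s}" using bitA(1) assms(1) unfolding A_def by auto
  qed
  have D: "A \<inter> (\<lambda>c. c + 2^m) ` A = {}" using bitA(2) assms(1) unfolding A_def by auto
  have "(\<Prod>c<2^s. phi c) = (\<Prod>c\<in>A. phi c) * (\<Prod>c\<in>(\<lambda>c. c + 2^m) ` A. phi c)"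
    unfolding U by (rule prod.union_disjoint) (use fA D in auto)
  also have "(\<Prod>c\<in>(\<lambda>c. c + 2^m) ` A. phi c) = (\<Prod>c\<in>A. phi (c + 2^m))"
    by (subst prod.reindex) (auto simp: inj_on_def)
  also have "\<dots> = (\<Prod>c\<in>A. phi c)" using assms(2) unfolding A_def by (intro prod.cong) auto
  also have "(\<Prod>c\<in>A. phi c) * (\<Prod>c\<in>A. phi c) = (\<Prod>c\<in>A. phi c * phi c)"
    by (simp add: prod.distrib)
  also have "\<dots> = 1" using assms(3) by simp
  finally show ?thesis .
qed


definition sg :: "bool \<Rightarrow> real" where "sg b = (if b then -1 else 1)"

lemma sg_sq[simp]: "sg b * sg b = 1" by (simp add: sg_def)

lemma sg_TF[simp]: "sg True = -1" "sg False = 1" by (simp_all add: sg_def)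

lemma sg_not: "sg (\<not> b) = - sg b" by (simp add: sg_def)

lemma sg_Suc: "sg (odd (Suc m)) = - sg (odd m)" by (simp add: sg_def)

lemma sg_odd_card: "finite C \<Longrightarrow> sg (odd (card {c\<in>C. P c})) = (\<Prod>c\<in>C. sg (P c))"
proof (induction C rule: finite_induct)
  case empty then show ?case by (simp add: sg_def)
next
  case (insert x F)
  have fin: "finite {c\<in>F. P c}" using insert(1) by simp
  have nx: "x \<notin> {c\<in>F. P c}" using insert(2) by simp
  have pr: "(\<Prod>c\<in>insert x F. sg (P c)) = sg (P x) * (\<Prod>c\<in>F. sg (P c))"
    using insert(1,2) by (rule prod.insert)
  show ?case
  proof (cases "P x")
    case True
    then have "{c \<in> insert x F. P c} = insert x {c\<in>F. P c}" by auto
    then have "card {c \<in> insert x F. P c} = Suc (card {c\<in>F. P c})" using fin nx by simp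
    then show ?thesis using pr insert(3) True by (simp add: sg_not)
  next
    case False
    then have "{c \<in> insert x F. P c} = {c\<in>F. P c}" by auto
    then show ?thesis using pr insert(3) False by simp
  qed
qed

definition avg :: "'a set \<Rightarrow> (('a \<Rightarrow> bool) \<Rightarrow> real) \<Rightarrow> real" where
  "avg I h = (\<Sum>x\<in>bvecs I. h x) / 2 ^ card I"

lemma bvecs_eq: "bvecs I = (\<lambda>A x. x \<in> A) ` Pow I"
proof (rule set_eqI, rule iffI)
  fix x assume "x \<in> bvecs I"
  then have "x = (\<lambda>v. v \<in> {v. x v})" "{v. x v} \<in> Pow I" by (auto simp: bvecs_def)
  then show "x \<in> (\<lambda>A x. x \<in> A) ` Pow I" by blast
qed (auto simp: bvecs_def)

lemma finite_bvecs[simp]: "finite I \<Longrightarrow> finite (bvecs I)"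
  by (simp add: bvecs_eq)

lemma card_bvecs: "finite I \<Longrightarrow> card (bvecs I) = 2 ^ card I"
proof -
  assume "finite I"
  have "inj_on (\<lambda>A x. x \<in> A) (Pow I)" by (auto simp: inj_on_def fun_eq_iff)
  then show ?thesis using \<open>finite I\<close> by (simp add: bvecs_eq card_image card_Pow)
qed

lemma avg_const: "finite I \<Longrightarrow> avg I (\<lambda>_. c) = c"
  by (simp add: avg_def card_bvecs)

lemma avg_cong: "(\<And>x. x \<in> bvecs I \<Longrightarrow> f x = g x) \<Longrightarrow> avg I f = avg I g"
proof -
  assume "\<And>x. x \<in> bvecs I \<Longrightarrow> f x = g x"
  then have "sum f (bvecs I) = sum g (bvecs I)" by (rule sum.cong[OF refl])
  then show ?thesis unfolding avg_def by simp
qed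

lemma avg_mult_right: "avg I (\<lambda>x. f x * c) = avg I f * c"
  unfolding avg_def by (simp add: sum_distrib_right)

lemma avg_mult_left: "avg I (\<lambda>x. c * f x) = c * avg I f"
  unfolding avg_def by (simp add: sum_distrib_left)

lemma sum_split:
  assumes "finite A" "finite B" "A \<inter> B = {}"
  shows "(\<Sum>X\<in>bvecs (A \<union> B). phi X) = (\<Sum>X1\<in>bvecs A. \<Sum>X2\<in>bvecs B. phi (\<lambda>v. X1 v \<or> X2 v))"
proof -
  have "(\<Sum>X1\<in>bvecs A. \<Sum>X2\<in>bvecs B. phi (\<lambda>v. X1 v \<or> X2 v))
      = (\<Sum>p\<in>bvecs A \<times> bvecs B. phi (\<lambda>v. fst p v \<or> snd p v))"
    by (subst sum.cartesian_product) (simp add: case_prod_beta)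
  also have "\<dots> = (\<Sum>X\<in>bvecs (A \<union> B). phi X)"
  proof (rule sum.reindex_bij_witness[where j="\<lambda>p v. fst p v \<or> snd p v"
          and i="\<lambda>X. (\<lambda>v. X v \<and> v \<in> A, \<lambda>v. X v \<and> v \<in> B)"])
    fix a assume a: "a \<in> bvecs A \<times> bvecs B"
    obtain a1 a2 where "a = (a1, a2)" by fastforce
    with a have "\<forall>v. a1 v \<longrightarrow> v \<in> A" "\<forall>v. a2 v \<longrightarrow> v \<in> B" by (auto simp: bvecs_def)
    with \<open>a = (a1,a2)\<close> assms(3)
    show "(\<lambda>v. (\<lambda>v. fst a v \<or> snd a v) v \<and> v \<in> A, \<lambda>v. (\<lambda>v. fst a v \<or> snd a v) v \<and> v \<in> B) = a"
      "(\<lambda>v. fst a v \<or> snd a v) \<in> bvecs (A \<union> B)"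
      by (auto simp: fun_eq_iff bvecs_def)
  next
    fix b assume "b \<in> bvecs (A \<union> B)"
    then show "(\<lambda>v. fst (\<lambda>v. b v \<and> v \<in> A, \<lambda>v. b v \<and> v \<in> B) v \<or> snd (\<lambda>v. b v \<and> v \<in> A, \<lambda>v. b v \<and> v \<in> B) v) = b"
      "(\<lambda>v. b v \<and> v \<in> A, \<lambda>v. b v \<and> v \<in> B) \<in> bvecs A \<times> bvecs B"
      by (auto simp: fun_eq_iff bvecs_def)
  qed simp
  finally show ?thesis by simp
qed

lemma avg_split:
  assumes "finite A" "finite B" "A \<inter> B = {}"
  shows "avg (A \<union> B) phi = avg A (\<lambda>X1. avg B (\<lambda>X2. phi (\<lambda>v. X1 v \<or> X2 v)))"
proof -
  have c: "card (A \<union> B) = card A + card B" using assms card_Un_disjoint by blast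
  have "avg A (\<lambda>X1. avg B (\<lambda>X2. phi (\<lambda>v. X1 v \<or> X2 v)))
     = (\<Sum>X1\<in>bvecs A. (\<Sum>X2\<in>bvecs B. phi (\<lambda>v. X1 v \<or> X2 v)) / 2 ^ card B) / 2 ^ card A"
    unfolding avg_def by simp
  also have "\<dots> = (\<Sum>X1\<in>bvecs A. \<Sum>X2\<in>bvecs B. phi (\<lambda>v. X1 v \<or> X2 v)) / 2 ^ card B / 2 ^ card A"
    by (simp only: sum_divide_distrib)
  also have "\<dots> = (\<Sum>X\<in>bvecs (A \<union> B). phi X) / 2 ^ card (A \<union> B)"
    unfolding sum_split[OF assms] c power_add by (simp add: mult.commute)
  finally show ?thesis unfolding avg_def by simp
qed



lemma avg_prod:
  assumes "finite C"
  shows "finite S \<Longrightarrow> (\<forall>c\<in>C. P c \<subseteq> S) \<Longrightarrow> (\<forall>c\<in>C. \<forall>c'\<in>C. c \<noteq> c' \<longrightarrow> P c \<inter> P c' = {})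
    \<Longrightarrow> (\<forall>c\<in>C. \<forall>X Y. (\<forall>v\<in>P c. X v = Y v) \<longrightarrow> h c X = h c Y)
    \<Longrightarrow> avg S (\<lambda>X. \<Prod>c\<in>C. h c X) = (\<Prod>c\<in>C. avg (P c) (h c))"
  using assms
proof (induction C arbitrary: S rule: finite_induct)
  case empty then show ?case by (simp add: avg_const)
next
  case (insert c0 C S)
  define P0 where "P0 = P c0"
  define R where "R = S - P0"
  have SU: "S = P0 \<union> R" and D: "P0 \<inter> R = {}" using insert(5) unfolding P0_def R_def by auto
  have fP0: "finite P0" and fR: "finite R" using insert(4) insert(5) unfolding P0_def R_def
    by (auto intro: finite_subset)
  have PR: "\<forall>c\<in>C. P c \<subseteq> R"
  proof
    fix c assume c: "c \<in> C"
    then have "c \<noteq> c0" using insert(2) by auto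
    then have "P c \<inter> P0 = {}" using insert(6) c unfolding P0_def by auto
    then show "P c \<subseteq> R" using insert(5) c unfolding R_def by auto
  qed
  have IH: "avg R (\<lambda>X. \<Prod>c\<in>C. h c X) = (\<Prod>c\<in>C. avg (P c) (h c))"
    using insert.IH[OF fR PR] insert(6,7) by auto
  have eq: "(\<Prod>c\<in>insert c0 C. h c (\<lambda>v. X1 v \<or> X2 v)) = h c0 X1 * (\<Prod>c\<in>C. h c X2)"
    if X1: "X1 \<in> bvecs P0" and X2: "X2 \<in> bvecs R" for X1 X2
  proof -
    have "h c0 (\<lambda>v. X1 v \<or> X2 v) = h c0 X1"
    proof -
      have "\<forall>v\<in>P c0. (X1 v \<or> X2 v) = X1 v" using X2 D unfolding bvecs_def P0_def by auto
      then show ?thesis using insert(7) by auto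
    qed
    moreover have "(\<Prod>c\<in>C. h c (\<lambda>v. X1 v \<or> X2 v)) = (\<Prod>c\<in>C. h c X2)"
    proof (rule prod.cong[OF refl])
      fix c assume c: "c \<in> C"
      have "\<forall>v\<in>P c. (X1 v \<or> X2 v) = X2 v" using X1 PR c D unfolding bvecs_def by auto
      then show "h c (\<lambda>v. X1 v \<or> X2 v) = h c X2" using insert(7) c by auto
    qed
    ultimately show ?thesis using insert(1,2) by simp
  qed
  have "avg S (\<lambda>X. \<Prod>c\<in>insert c0 C. h c X)
      = avg P0 (\<lambda>X1. avg R (\<lambda>X2. \<Prod>c\<in>insert c0 C. h c (\<lambda>v. X1 v \<or> X2 v)))"
    unfolding SU by (rule avg_split[OF fP0 fR D])
  also have "\<dots> = avg P0 (\<lambda>X1. avg R (\<lambda>X2. h c0 X1 * (\<Prod>c\<in>C. h c X2)))"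
    by (intro avg_cong) (simp add: eq)
  also have "\<dots> = avg P0 (\<lambda>X1. h c0 X1 * (\<Prod>c\<in>C. avg (P c) (h c)))"
    by (simp add: avg_mult_left IH)
  also have "\<dots> = (\<Prod>c\<in>insert c0 C. avg (P c) (h c))"
    using insert(1,2) by (simp add: avg_mult_right P0_def)
  finally show ?case .
qed

lemma avg_reindex:
  assumes "inj_on \<pi> J"
  shows "avg (\<pi> ` J) (\<lambda>z. G (\<lambda>j. j \<in> J \<and> z (\<pi> j))) = avg J G"
proof -
  have "(\<Sum>w\<in>bvecs J. G w) = (\<Sum>z\<in>bvecs (\<pi> ` J). G (\<lambda>j. j \<in> J \<and> z (\<pi> j)))"
  proof (rule sum.reindex_bij_witness[where i="\<lambda>z j. j \<in> J \<and> z (\<pi> j)"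
        and j="\<lambda>w v. v \<in> \<pi> ` J \<and> w (the_inv_into J \<pi> v)"])
    fix w assume w: "w \<in> bvecs J"
    show "(\<lambda>j. j \<in> J \<and> (\<pi> j \<in> \<pi> ` J \<and> w (the_inv_into J \<pi> (\<pi> j)))) = w"
      using w assms by (auto simp: fun_eq_iff bvecs_def the_inv_into_f_f inj_on_def; metis)
    then show "G (\<lambda>j. j \<in> J \<and> (\<pi> j \<in> \<pi> ` J \<and> w (the_inv_into J \<pi> (\<pi> j)))) = G w" by simp
    show "(\<lambda>v. v \<in> \<pi> ` J \<and> w (the_inv_into J \<pi> v)) \<in> bvecs (\<pi> ` J)" by (auto simp: bvecs_def)
  next
    fix z assume z: "z \<in> bvecs (\<pi> ` J)"
    show "(\<lambda>v. v \<in> \<pi> ` J \<and> (the_inv_into J \<pi> v \<in> J \<and> z (\<pi> (the_inv_into J \<pi> v)))) = z"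
      using z assms by (auto simp: fun_eq_iff bvecs_def the_inv_into_f_f)
    show "(\<lambda>j. j \<in> J \<and> z (\<pi> j)) \<in> bvecs J" by (auto simp: bvecs_def)
  qed
  moreover have "card (\<pi> ` J) = card J" using assms by (rule card_image)
  ultimately show ?thesis unfolding avg_def by simp
qed

lemma bvecs_single: "bvecs {j} = {\<lambda>_. False, \<lambda>v. v = j}"
  by (auto simp: bvecs_def fun_eq_iff)

lemma avg_single: "avg {j} (\<lambda>X. phi (X j)) = (phi False + phi True) / 2"
proof -
  have "(\<lambda>_. False) \<noteq> (\<lambda>v. v = j)" by (auto simp: fun_eq_iff)
  then show ?thesis unfolding avg_def bvecs_single by simp
qed

lemma avg_prod_coord:
  assumes "finite K"
  shows "avg K (\<lambda>b. \<Prod>j\<in>K. phi j (b j)) = (\<Prod>j\<in>K. (phi j False + phi j True) / 2)"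
proof -
  have "avg K (\<lambda>b. \<Prod>j\<in>K. phi j (b j)) = (\<Prod>j\<in>K. avg {j} (\<lambda>X. phi j (X j)))"
    by (rule avg_prod[where P="\<lambda>j. {j}"]) (use assms in auto)
  then show ?thesis by (simp add: avg_single)
qed



lemma avg_swap: "avg A (\<lambda>x. avg B (\<lambda>y. phi x y)) = avg B (\<lambda>y. avg A (\<lambda>x. phi x y))"
  unfolding avg_def sum_divide_distrib[symmetric] by (simp add: sum.swap[of _ "bvecs A"])

lemma sg_neq: "sg (p \<noteq> q) = sg p * sg q" by (simp add: sg_def)

lemma bias_on_avg: "bias_on I h = avg I (\<lambda>x. sg (h x))"
  unfolding bias_on_def avg_def sg_def by simp

lemma sg_lin_prod:
  assumes "k \<le> n" "b \<in> bvecs {1..k}"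
  shows "sg (lin n b y) = (\<Prod>j\<in>{1..k}. sg (b j \<and> y j))"
proof -
  have "sg (lin n b y) = (\<Prod>j\<in>{1..n}. sg (b j \<and> y j))"
    unfolding lin_def by (rule sg_odd_card) simp
  also have "\<dots> = (\<Prod>j\<in>{1..k}. sg (b j \<and> y j))"
  proof (rule prod.mono_neutral_right)
    show "\<forall>i\<in>{1..n} - {1..k}. sg (b i \<and> y i) = 1"
    proof
      fix i assume i: "i \<in> {1..n} - {1..k}"
      have "b i \<longrightarrow> i \<in> {1..k}" using assms(2) by (auto simp: bvecs_def)
      then show "sg (b i \<and> y i) = 1" using i by auto
    qed
  qed (use assms in auto)
  finally show ?thesis .
qed

lemma lin_split:
  assumes "b \<in> bvecs {1..k}" "w \<in> bvecs {k<..n}"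
  shows "lin n b (\<lambda>j. y j \<or> w j) = lin n b y"
proof -
  have "\<not> (b j \<and> w j)" for j
  proof -
    have "b j \<longrightarrow> j \<le> k" "w j \<longrightarrow> k < j" using assms by (auto simp: bvecs_def)
    then show ?thesis by auto
  qed
  then have "{j\<in>{1..n}. b j \<and> (y j \<or> w j)} = {j\<in>{1..n}. b j \<and> y j}"
    by auto
  then show ?thesis unfolding lin_def by simp
qed

lemma ortho:
  assumes "k \<le> n" "y \<in> bvecs {1..k}" "y' \<in> bvecs {1..k}"
  shows "avg {1..k} (\<lambda>b. sg (lin n b y) * sg (lin n b y')) = (if y = y' then 1 else 0)"
proof -
  have "avg {1..k} (\<lambda>b. sg (lin n b y) * sg (lin n b y'))
      = avg {1..k} (\<lambda>b. \<Prod>j\<in>{1..k}. sg (b j \<and> y j) * sg (b j \<and> y' j))"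
    by (intro avg_cong) (simp add: sg_lin_prod[OF assms(1)] prod.distrib)
  also have "\<dots> = (\<Prod>j\<in>{1..k}. (sg (False \<and> y j) * sg (False \<and> y' j) + sg (True \<and> y j) * sg (True \<and> y' j)) / 2)"
    by (rule avg_prod_coord) simp
  also have "\<dots> = (\<Prod>j\<in>{1..k}. (if y j = y' j then 1 else 0))"
    by (intro prod.cong refl) (simp add: sg_def)
  also have "\<dots> = (if y = y' then 1 else 0)"
  proof (cases "y = y'")
    case True then show ?thesis by simp
  next
    case False
    then obtain j where "y j \<noteq> y' j" by auto
    then have "j \<in> {1..k}" using assms(2,3) by (auto simp: bvecs_def)
    then have "(\<Prod>j\<in>{1..k}. (if y j = y' j then 1 else 0)) = (0::real)"
      using \<open>y j \<noteq> y' j\<close> by (intro prod_zero) auto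
    then show ?thesis using False by simp
  qed
  finally show ?thesis .
qed

definition gfun :: "nat \<Rightarrow> nat \<Rightarrow> ((nat \<Rightarrow> bool) \<Rightarrow> bool) \<Rightarrow> (nat \<Rightarrow> bool) \<Rightarrow> real" where
  "gfun n k f y = avg {k<..n} (\<lambda>w. sg (f (\<lambda>j. y j \<or> w j)))"

lemma bias_lin_g:
  assumes "k \<le> n" "b \<in> bvecs {1..k}"
  shows "bias_lin n f b = avg {1..k} (\<lambda>y. gfun n k f y * sg (lin n b y))"
proof -
  have U: "{1..n} = {1..k} \<union> {k<..n}" using assms(1) by auto
  have "bias_lin n f b = avg ({1..k} \<union> {k<..n}) (\<lambda>x. sg (f x) * sg (lin n b x))"
    unfolding bias_lin_def bias_on_avg U[symmetric] sg_neq by simp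
  also have "\<dots> = avg {1..k} (\<lambda>y. avg {k<..n} (\<lambda>w. sg (f (\<lambda>j. y j \<or> w j)) * sg (lin n b (\<lambda>j. y j \<or> w j))))"
    by (rule avg_split) auto
  also have "\<dots> = avg {1..k} (\<lambda>y. avg {k<..n} (\<lambda>w. sg (f (\<lambda>j. y j \<or> w j)) * sg (lin n b y)))"
    by (intro avg_cong) (simp add: lin_split[OF assms(2)])
  also have "\<dots> = avg {1..k} (\<lambda>y. gfun n k f y * sg (lin n b y))"
    by (simp add: avg_mult_right gfun_def)
  finally show ?thesis .
qed

lemma fourier:
  assumes "k \<le> n" "a \<in> bvecs {1..k}" "\<forall>b\<in>bvecs {1..k}. b \<noteq> a \<longrightarrow> bias_lin n f b = 0"
    and y': "y' \<in> bvecs {1..k}"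
  shows "gfun n k f y' = bias_lin n f a * sg (lin n a y')"
proof -
  let ?K = "{1..k::nat}"
  have "avg ?K (\<lambda>b. bias_lin n f b * sg (lin n b y'))
      = avg ?K (\<lambda>b. if b = a then bias_lin n f a * sg (lin n a y') else 0)"
    by (intro avg_cong) (use assms(3) in auto)
  also have "\<dots> = bias_lin n f a * sg (lin n a y') / 2 ^ k"
    unfolding avg_def using assms(2) by (simp add: sum.delta)
  finally have L: "avg ?K (\<lambda>b. bias_lin n f b * sg (lin n b y')) = bias_lin n f a * sg (lin n a y') / 2 ^ k" .
  have "avg ?K (\<lambda>b. bias_lin n f b * sg (lin n b y'))
      = avg ?K (\<lambda>b. avg ?K (\<lambda>y. gfun n k f y * (sg (lin n b y) * sg (lin n b y'))))"
    by (intro avg_cong) (simp add: bias_lin_g[OF assms(1)] avg_mult_right[symmetric] mult.assoc)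
  also have "\<dots> = avg ?K (\<lambda>y. avg ?K (\<lambda>b. gfun n k f y * (sg (lin n b y) * sg (lin n b y'))))"
    by (rule avg_swap)
  also have "\<dots> = avg ?K (\<lambda>y. if y = y' then gfun n k f y' else 0)"
  proof (intro avg_cong)
    fix y assume y: "y \<in> bvecs ?K"
    show "avg ?K (\<lambda>b. gfun n k f y * (sg (lin n b y) * sg (lin n b y'))) = (if y = y' then gfun n k f y' else 0)"
      unfolding avg_mult_left ortho[OF assms(1) y y'] by simp
  qed
  also have "\<dots> = gfun n k f y' / 2 ^ k"
    unfolding avg_def using y' by (simp add: sum.delta)
  finally show ?thesis using L by simp
qed



lemma mod_cancel:
  fixes t a b T :: nat
  assumes "(t + a) mod T = (t + b) mod T"
  shows "a mod T = b mod T"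
proof (cases "a \<le> b")
  case True
  then have "T dvd (t + b) - (t + a)" using assms mod_eq_dvd_iff_nat[of "t+a" "t+b" T] by simp
  then have "T dvd b - a" by simp
  then show ?thesis using True mod_eq_dvd_iff_nat[of a b T] by simp
next
  case False
  then have "T dvd (t + a) - (t + b)" using assms mod_eq_dvd_iff_nat[of "t+b" "t+a" T] by simp
  then have "T dvd a - b" by simp
  then show ?thesis using False mod_eq_dvd_iff_nat[of b a T] by simp
qed

lemma block_cover:
  fixes ell :: "nat \<Rightarrow> nat"
  assumes "ell 1 = 0"
  shows "m \<le> s \<Longrightarrow> 0 < j \<Longrightarrow> j \<le> ell (Suc m) \<Longrightarrow> \<exists>i\<in>{1..s}. ell i < j \<and> j \<le> ell (Suc i)"
proof (induction m)
  case 0 then show ?case using assms by simp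
next
  case (Suc m)
  show ?case
  proof (cases "j \<le> ell (Suc m)")
    case True then show ?thesis using Suc by simp
  next
    case False then show ?thesis using Suc.prems by (intro bexI[of _ "Suc m"]) auto
  qed
qed

lemma tau_bit: "tau s M c = (\<Sum>l\<in>{1..s}. if bit c (l - 1) then M l else 0)"
  unfolding tau_def by (simp add: bit_iff_odd)

lemma tau_shift:
  assumes i: "i \<in> {1..s}" and c: "c < 2^s" "\<not> bit c (i - 1)"
  shows "tau s M (c + 2^(i-1)) = tau s M c + M i"
proof -
  have m: "i - 1 < s" using i by auto
  have b: "bit (c + 2^(i-1)) (l - 1) \<longleftrightarrow> l = i \<or> bit c (l - 1)" if "l \<in> {1..s}" for l
    using bitA(2)[OF c(1) m c(2), of "l - 1"] that i by auto
  have fin: "finite {1..s}" by simp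
  have "tau s M (c + 2^(i-1)) = M i + (\<Sum>l\<in>{1..s} - {i}. if bit (c + 2^(i-1)) (l - 1) then M l else 0)"
    unfolding tau_bit sum.remove[OF fin i] using b[OF i] by simp
  also have "(\<Sum>l\<in>{1..s} - {i}. if bit (c + 2^(i-1)) (l - 1) then M l else 0)
      = (\<Sum>l\<in>{1..s} - {i}. if bit c (l - 1) then M l else 0)"
  proof (intro sum.cong refl)
    fix l assume l: "l \<in> {1..s} - {i}"
    then have "bit (c + 2^(i-1)) (l - 1) \<longleftrightarrow> bit c (l - 1)" using b[of l] by auto
    then show "(if bit (c + 2^(i-1)) (l - 1) then M l else 0) = (if bit c (l - 1) then M l else 0)" by simp
  qed
  also have "tau s M c = 0 + (\<Sum>l\<in>{1..s} - {i}. if bit c (l - 1) then M l else 0)"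
    unfolding tau_bit sum.remove[OF fin i] using c(2) by simp
  ultimately show ?thesis by simp
qed



lemma core:
  fixes n s k :: nat and T M ell :: "nat \<Rightarrow> nat"
    and f :: "(nat \<Rightarrow> bool) \<Rightarrow> bool" and t :: nat
  assumes T_pos: "\<forall>j\<in>{1..n}. T j > 0"
    and l_first: "ell 1 = 0"
    and l_last: "ell (Suc s) = k"
    and k_le: "k \<le> n"
    and Mdvd: "\<forall>i\<in>{1..s}. \<forall>j\<in>{ell i<..ell (Suc i)}. T j dvd M i"
    and G1: "\<forall>j. k < j \<and> j \<le> n \<longrightarrow> inj_on (\<lambda>c. tau s M c mod T j) {..<2 ^ s}"
    and a: "a \<in> bvecs {1..k}"
    and van: "\<forall>b\<in>bvecs {1..k}. b \<noteq> a \<longrightarrow> bias_lin n f b = 0"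
  shows "bias_PC n s M T f t = bias_lin n f a ^ (2 ^ s)"
proof -
  define pos where "pos c j = (t + tau s M c) mod T j" for c j
  define S1 where "S1 = {p \<in> seq_vars n T. fst p \<le> k}"
  define S2 where "S2 = {p \<in> seq_vars n T. k < fst p}"
  define yc where "yc X1 c = (\<lambda>j. j \<in> {1..k} \<and> X1 (j, pos c j))" for X1 :: "nat \<times> nat \<Rightarrow> bool" and c
  define pi where "pi c = (\<lambda>j. (j, pos c j))" for c
  define J0 where "J0 = {k<..n}"
  define F where "F = bias_lin n f a"
  let ?C = "{..<(2::nat)^s}"
  have "seq_vars n T = (SIGMA j:{1..n}. {..<T j})" by (auto simp: seq_vars_def)
  then have finS: "finite (seq_vars n T)" by simp
  have SU: "seq_vars n T = S1 \<union> S2" and D: "S1 \<inter> S2 = {}" unfolding S1_def S2_def by auto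
  have fS1: "finite S1" and fS2: "finite S2" using finS unfolding S1_def S2_def by auto
  have A: "bias_PC n s M T f t = avg (seq_vars n T)
      (\<lambda>X. \<Prod>c\<in>?C. sg (f (\<lambda>j. if j\<in>{1..n} then X (j, pos c j) else False)))"
    unfolding bias_PC_def bias_on_avg PC_def seqv_def pos_def
    by (rule avg_cong, rule sg_odd_card) simp
  also have "\<dots> = avg S1 (\<lambda>X1. avg S2 (\<lambda>X2. \<Prod>c\<in>?C.
        sg (f (\<lambda>j. if j\<in>{1..n} then (X1 (j, pos c j) \<or> X2 (j, pos c j)) else False))))"
    unfolding SU by (rule avg_split[OF fS1 fS2 D])
  also have "\<dots> = avg S1 (\<lambda>X1. F ^ (2 ^ s))"
  proof (rule avg_cong)
    fix X1 assume X1: "X1 \<in> bvecs S1"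
    have X1p: "X1 (j, u) \<Longrightarrow> j \<in> {1..k}" for j u
      using X1 unfolding bvecs_def S1_def seq_vars_def by auto
    have C1: "(\<lambda>j. if j\<in>{1..n} then (X1 (j, pos c j) \<or> X2 (j, pos c j)) else False)
        = (\<lambda>j. yc X1 c j \<or> (j \<in> J0 \<and> X2 (pi c j)))" if X2: "X2 \<in> bvecs S2" for X2 c
    proof
      fix j
      have X2p: "X2 (j, u) \<Longrightarrow> j \<in> J0" for u
        using X2 unfolding bvecs_def S2_def seq_vars_def J0_def by auto
      show "(if j\<in>{1..n} then (X1 (j, pos c j) \<or> X2 (j, pos c j)) else False)
          = (yc X1 c j \<or> (j \<in> J0 \<and> X2 (pi c j)))"
        using X1p[of j "pos c j"] X2p[of "pos c j"] k_le unfolding yc_def pi_def J0_def by auto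
    qed
    have "avg S2 (\<lambda>X2. \<Prod>c\<in>?C.
        sg (f (\<lambda>j. if j\<in>{1..n} then (X1 (j, pos c j) \<or> X2 (j, pos c j)) else False)))
      = avg S2 (\<lambda>X2. \<Prod>c\<in>?C. sg (f (\<lambda>j. yc X1 c j \<or> (j \<in> J0 \<and> X2 (pi c j)))))"
    proof (rule avg_cong)
      fix X2 assume X2: "X2 \<in> bvecs S2"
      show "(\<Prod>c\<in>?C. sg (f (\<lambda>j. if j\<in>{1..n} then (X1 (j, pos c j) \<or> X2 (j, pos c j)) else False)))
        = (\<Prod>c\<in>?C. sg (f (\<lambda>j. yc X1 c j \<or> (j \<in> J0 \<and> X2 (pi c j)))))"
        by (simp only: C1[OF X2])
    qed
    also have "\<dots> = (\<Prod>c\<in>?C. avg (pi c ` J0) (\<lambda>X2. sg (f (\<lambda>j. yc X1 c j \<or> (j \<in> J0 \<and> X2 (pi c j))))))"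
    proof (rule avg_prod[where P="\<lambda>c. pi c ` J0"])
      show "finite S2" by (fact fS2)
      show "\<forall>c\<in>?C. pi c ` J0 \<subseteq> S2"
        using T_pos unfolding pi_def J0_def S2_def seq_vars_def pos_def by auto
      show "\<forall>c\<in>?C. \<forall>c'\<in>?C. c \<noteq> c' \<longrightarrow> pi c ` J0 \<inter> pi c' ` J0 = {}"
      proof (intro ballI impI)
        fix c c' assume c: "c \<in> ?C" and c': "c' \<in> ?C" and ne: "c \<noteq> c'"
        show "pi c ` J0 \<inter> pi c' ` J0 = {}"
        proof (rule ccontr)
          assume "pi c ` J0 \<inter> pi c' ` J0 \<noteq> {}"
          then obtain j where j: "j \<in> J0" and e: "pos c j = pos c' j" unfolding pi_def by auto
          from e have "tau s M c mod T j = tau s M c' mod T j" unfolding pos_def by (rule mod_cancel)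
          moreover have "inj_on (\<lambda>c. tau s M c mod T j) ?C" using G1 j unfolding J0_def by auto
          ultimately show False using c c' ne by (auto dest: inj_onD)
        qed
      qed
      show "\<forall>c\<in>?C. \<forall>X Y. (\<forall>v\<in>pi c ` J0. X v = Y v) \<longrightarrow>
          sg (f (\<lambda>j. yc X1 c j \<or> (j \<in> J0 \<and> X (pi c j)))) = sg (f (\<lambda>j. yc X1 c j \<or> (j \<in> J0 \<and> Y (pi c j))))"
      proof (intro ballI allI impI)
        fix c and X Y :: "nat \<times> nat \<Rightarrow> bool" assume "\<forall>v\<in>pi c ` J0. X v = Y v"
        then have "(\<lambda>j. yc X1 c j \<or> (j \<in> J0 \<and> X (pi c j))) = (\<lambda>j. yc X1 c j \<or> (j \<in> J0 \<and> Y (pi c j)))"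
          by auto
        then show "sg (f (\<lambda>j. yc X1 c j \<or> (j \<in> J0 \<and> X (pi c j)))) = sg (f (\<lambda>j. yc X1 c j \<or> (j \<in> J0 \<and> Y (pi c j))))"
          by simp
      qed
    qed simp
    also have "\<dots> = (\<Prod>c\<in>?C. gfun n k f (yc X1 c))"
    proof (rule prod.cong[OF refl])
      fix c
      have inj: "inj_on (pi c) J0" unfolding pi_def by (auto simp: inj_on_def)
      show "avg (pi c ` J0) (\<lambda>X2. sg (f (\<lambda>j. yc X1 c j \<or> (j \<in> J0 \<and> X2 (pi c j))))) = gfun n k f (yc X1 c)"
        using avg_reindex[OF inj, of "\<lambda>w. sg (f (\<lambda>j. yc X1 c j \<or> w j))"]
        unfolding gfun_def J0_def by simp
    qed
    also have "\<dots> = (\<Prod>c\<in>?C. F * sg (lin n a (yc X1 c)))"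
    proof (rule prod.cong[OF refl])
      fix c
      have "yc X1 c \<in> bvecs {1..k}" unfolding yc_def bvecs_def by auto
      then show "gfun n k f (yc X1 c) = F * sg (lin n a (yc X1 c))"
        unfolding F_def by (rule fourier[OF k_le a van])
    qed
    also have "\<dots> = F ^ (2 ^ s) * (\<Prod>c\<in>?C. sg (lin n a (yc X1 c)))"
      by (simp add: prod.distrib)
    also have "(\<Prod>c\<in>?C. sg (lin n a (yc X1 c))) = (\<Prod>c\<in>?C. \<Prod>j\<in>{1..k}. sg (a j \<and> X1 (j, pos c j)))"
      by (intro prod.cong refl) (simp add: sg_lin_prod[OF k_le a] yc_def)
    also have "\<dots> = (\<Prod>j\<in>{1..k}. \<Prod>c\<in>?C. sg (a j \<and> X1 (j, pos c j)))"
      by (rule prod.swap)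
    also have "\<dots> = (\<Prod>j\<in>{1..k}. 1)"
    proof (rule prod.cong[OF refl])
      fix j assume j: "j \<in> {1..k}"
      obtain i where i: "i \<in> {1..s}" "ell i < j" "j \<le> ell (Suc i)"
        using block_cover[where ell=ell and m=s and s=s and j=j, OF l_first] j l_last by auto
      have dv: "T j dvd M i" using Mdvd i by auto
      show "(\<Prod>c\<in>?C. sg (a j \<and> X1 (j, pos c j))) = 1"
      proof (rule pair_prod[where m="i - 1"])
        show "i - 1 < s" using i by auto
        show "\<forall>c<2 ^ s. \<not> bit c (i - 1) \<longrightarrow>
            sg (a j \<and> X1 (j, pos (c + 2 ^ (i - 1)) j)) = sg (a j \<and> X1 (j, pos c j))"
        proof (intro allI impI)
          fix c :: nat assume c: "c < 2^s" "\<not> bit c (i - 1)"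
          obtain r where r: "M i = T j * r" using dv by (auto simp: dvd_def)
          have "pos (c + 2 ^ (i - 1)) j = pos c j"
            unfolding pos_def tau_shift[OF i(1) c] r by (simp add: add.assoc[symmetric])
          then show "sg (a j \<and> X1 (j, pos (c + 2 ^ (i - 1)) j)) = sg (a j \<and> X1 (j, pos c j))" by simp
        qed
      qed simp
    qed
    finally show "avg S2 (\<lambda>X2. \<Prod>c\<in>?C.
        sg (f (\<lambda>j. if j\<in>{1..n} then (X1 (j, pos c j) \<or> X2 (j, pos c j)) else False))) = F ^ (2 ^ s)"
      by simp
  qed
  also have "\<dots> = F ^ (2 ^ s)" using fS1 by (rule avg_const)
  finally show ?thesis unfolding F_def .
qed


theorem theorem4:
  fixes n s k :: nat and T q M ell :: "nat \<Rightarrow> nat"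
    and f :: "(nat \<Rightarrow> bool) \<Rightarrow> bool" and t :: nat
  assumes T_pos: "\<forall>j\<in>{1..n}. T j > 0"
    and s_pos: "s \<ge> 1"
    and l_first: "ell 1 = 0"
    and l_mono: "\<forall>i\<in>{1..s}. ell i < ell (Suc i)"
    and l_last: "ell (Suc s) = k"
    and k_le: "k \<le> n"
    and q_pos: "\<forall>i\<in>{1..s}. q i > 0"
    and M_def: "\<forall>i\<in>{1..s}. M i = q i * Lcm (T ` {ell i<..ell (Suc i)})"
    and G1: "\<forall>j. k < j \<and> j \<le> n \<longrightarrow> inj_on (\<lambda>c. tau s M c mod T j) {..<2 ^ s}"
    and G2: "\<forall>i\<in>{1..s}. \<forall>j\<in>{ell i<..ell (Suc i)}.
               inj_on (\<lambda>c. tau_excl s M i c mod T j) {c. c < 2 ^ s \<and> \<not> odd (c div 2 ^ (i - 1))}"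
  shows "(\<forall>a. a \<in> bvecs {1..k} \<and> bias_lin n f a \<noteq> 0
              \<and> (\<forall>b\<in>bvecs {1..k}. bias_lin n f b \<noteq> 0 \<longrightarrow> b = a)
            \<longrightarrow> bias_PC n s M T f t = (bias_lin n f a) ^ (2 ^ s))
       \<and> (resilient n (k - 1) f
            \<longrightarrow> bias_PC n s M T f t = (bias_lin n f (\<lambda>j. 1 \<le> j \<and> j \<le> k)) ^ (2 ^ s))"
  proof -
  have Mdvd: "\<forall>i\<in>{1..s}. \<forall>j\<in>{ell i<..ell (Suc i)}. T j dvd M i"
  proof (intro ballI)
    fix i j assume i: "i \<in> {1..s}" and j: "j \<in> {ell i<..ell (Suc i)}"
    have "T j dvd Lcm (T ` {ell i<..ell (Suc i)})" using j by (intro dvd_Lcm) auto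
    then show "T j dvd M i" using M_def i by auto
  qed
  note C = core[OF T_pos l_first l_last k_le Mdvd G1]
  show ?thesis
  proof (intro conjI allI impI)
    fix a assume a: "a \<in> bvecs {1..k} \<and> bias_lin n f a \<noteq> 0
              \<and> (\<forall>b\<in>bvecs {1..k}. bias_lin n f b \<noteq> 0 \<longrightarrow> b = a)"
    then show "bias_PC n s M T f t = (bias_lin n f a) ^ (2 ^ s)"
      by (intro C) auto
  next
    assume res: "resilient n (k - 1) f"
    define one where "one = (\<lambda>j::nat. 1 \<le> j \<and> j \<le> k)"
    have one: "one \<in> bvecs {1..k}" unfolding one_def bvecs_def by auto
    have van: "\<forall>b\<in>bvecs {1..k}. b \<noteq> one \<longrightarrow> bias_lin n f b = 0"
    proof (intro ballI impI)
      fix b assume b: "b \<in> bvecs {1..k}" and ne: "b \<noteq> one"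
      then obtain j where "b j \<noteq> one j" by auto
      moreover have "b j \<longrightarrow> j \<in> {1..k}" using b by (auto simp: bvecs_def)
      ultimately have j: "j \<in> {1..k}" "\<not> b j" unfolding one_def by auto
      have bn: "b \<in> bvecs {1..n}" using b k_le by (auto simp: bvecs_def)
      have "{j\<in>{1..n}. b j} \<subset> {1..k}"
      proof -
        have "{j\<in>{1..n}. b j} \<subseteq> {1..k}" using b by (auto simp: bvecs_def)
        moreover have "j \<notin> {j\<in>{1..n}. b j}" using j by auto
        ultimately show ?thesis using j by blast
      qed
      then have "card {j\<in>{1..n}. b j} < card {1..k}" by (intro psubset_card_mono) auto
      then have "hweight n b \<le> k - 1" unfolding hweight_def by simp
      then show "bias_lin n f b = 0" using res bn unfolding resilient_def by auto
    qed
    show "bias_PC n s M T f t = (bias_lin n f (\<lambda>j. 1 \<le> j \<and> j \<le> k)) ^ (2 ^ s)"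
      using C[OF one van] unfolding one_def .
  qed
qed

end
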